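(* Let $n,k,r\ge 3$ be integers with $r,k\le 0.01\log n$, and let $\mathcal{H}=\mathcal{H}(n,k,r)$. (i) If $r\le k$, then $\dfrac{n^{2k}}{r^{2k}}\le e(\mathcal{H})\le \dfrac{k\,2^{r+k}}{r!}\,n^{2k}$. (ii) If $r=k+1$, then $\dfrac{n^{2k}}{r^{2k}}\le e(\mathcal{H})\le \dfrac{k\,2^{r+k}}{r!}\,n^{2k}\log n$. (iii) If $k+1<r\le 2k$, then $k\binom{n}{r}n^{k-1}\le e(\mathcal{H})\le \dfrac{k\,2^{r+k+1}}{r!}\,n^{r+k-1}$.
   Context: Logarithms are to base 2. For integers $n,k,r\ge 3$, $\mathcal{H}(n,k,r)$ is the $r$-uniform hypergraph with vertex set $[n]^k=\{1,\dots,n\}^k$ whose edges are all $r$-element subsets of $[n]^k$ whose points lie on a common line in $\mathbb{R}^k$. $e(\cdot)$ denotes the number of edges. *)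

theory Defs
  imports "HOL-Analysis.Analysis"
begin

text \<open>The grid [n]^k, embedded in R^k; the dimension k is CARD('k).\<close>
definition grid :: "nat \<Rightarrow> (real^'k) set" where
  "grid n = {x. \<forall>i. x $ i \<in> real ` {1..n}}"

definition hedges :: "nat \<Rightarrow> nat \<Rightarrow> (real^'k) set set" where
  "hedges n r = {S. S \<subseteq> grid n \<and> card S = r \<and> collinear S}"

end

theory Submission
  imports Defs
begin

definition iv :: "('k \<Rightarrow> int) \<Rightarrow> real^'k" where
  "iv z = (\<chi> i. of_int (z i))"

lemma iv_nth[simp]: "iv z $ i = of_int (z i)"
  by (simp add: iv_def)

lemma iv_inj: "inj iv"
  by (rule injI) (auto simp: vec_eq_iff fun_eq_iff)

lemma iv_add: "iv (\<lambda>i. a i + b i) = iv a + iv b"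
  by (simp add: vec_eq_iff)

lemma iv_diff: "iv (\<lambda>i. a i - b i) = iv a - iv b"
  by (simp add: vec_eq_iff)

lemma iv_smult: "iv (\<lambda>i. c * a i) = of_int c *\<^sub>R iv a"
  by (simp add: vec_eq_iff)

definition Gset :: "nat \<Rightarrow> ('k \<Rightarrow> int) set" where
  "Gset n = PiE UNIV (\<lambda>_. {1..int n})"

lemma grid_eq: "grid n = iv ` Gset n"
proof (intro set_eqI iffI)
  fix x :: "real^'k" assume "x \<in> grid n"
  hence h: "\<forall>i. \<exists>a\<in>{1..n}. x $ i = real a" by (auto simp: grid_def)
  define z where "z = (\<lambda>i. \<lfloor>x $ i\<rfloor>)"
  have "iv z = x"
  proof (subst vec_eq_iff, intro allI)
    fix i from h obtain a where "x $ i = real a" by blast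
    thus "iv z $ i = x $ i" by (simp add: z_def)
  qed
  moreover have "z \<in> Gset n"
    unfolding Gset_def PiE_UNIV_domain
  proof (intro Pi_I)
    fix i from h obtain a where "a \<in> {1..n}" "x $ i = real a" by blast
    thus "z i \<in> {1..int n}" by (simp add: z_def)
  qed
  ultimately show "x \<in> iv ` Gset n" by blast
next
  fix x :: "real^'k" assume "x \<in> iv ` Gset n"
  then obtain z where z: "z \<in> Gset n" "x = iv z" by blast
  have "\<forall>i. x $ i \<in> real ` {1..n}"
  proof
    fix i
    have "z i \<in> {1..int n}" using z(1) by (auto simp: Gset_def PiE_UNIV_domain)
    hence "x $ i = real (nat (z i))" "nat (z i) \<in> {1..n}" using z(2) by auto
    thus "x $ i \<in> real ` {1..n}" by blast
  qed
  thus "x \<in> grid n" by (simp add: grid_def)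
qed

lemma card_Gset: "card (Gset n :: ('k::finite \<Rightarrow> int) set) = n ^ CARD('k)"
  by (simp add: Gset_def card_PiE)

lemma finite_Gset: "finite (Gset n :: ('k::finite \<Rightarrow> int) set)"
  by (simp add: Gset_def finite_PiE)

lemma card_grid: "card (grid n :: (real^'k::finite) set) = n ^ CARD('k)"
  by (simp add: grid_eq card_image inj_on_subset[OF iv_inj] card_Gset)

lemma finite_grid: "finite (grid n :: (real^'k::finite) set)"
  by (simp add: grid_eq finite_Gset)

lemma grid_toz:
  assumes "y \<in> grid n"
  shows "iv (\<lambda>i. \<lfloor>y $ i\<rfloor>) = y \<and> (\<lambda>i. \<lfloor>y $ i\<rfloor>) \<in> Gset n"
proof -
  obtain z where z: "z \<in> Gset n" "y = iv z" using assms by (auto simp: grid_eq)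
  have "(\<lambda>i. \<lfloor>y $ i\<rfloor>) = z" using z(2) by auto
  thus ?thesis using z by simp
qed

lemma iv_eq0: "iv z = 0 \<longleftrightarrow> z = (\<lambda>_. 0)"
  by (auto simp: vec_eq_iff fun_eq_iff)

definition mu :: "('k::finite \<Rightarrow> int) \<Rightarrow> nat" where
  "mu z = (\<Sum>i\<in>UNIV. nat \<bar>z i\<bar>)"

lemma real_mu: "real (mu z) = (\<Sum>i\<in>UNIV. \<bar>real_of_int (z i)\<bar>)"
  by (simp add: mu_def of_nat_sum)

lemma lattice_line:
  fixes u :: "real^'k::finite"
  assumes "z0 \<noteq> (\<lambda>_. 0)" "\<exists>c. iv z0 = c *\<^sub>R u"
  obtains w where "w \<noteq> (\<lambda>_. 0)" "\<exists>c. iv w = c *\<^sub>R u"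
    "\<And>z. \<exists>c. iv z = c *\<^sub>R u \<Longrightarrow> \<exists>a::int. z = (\<lambda>i. a * w i)"
proof -
  let ?C = "\<lambda>z. z \<noteq> (\<lambda>_. 0) \<and> (\<exists>c. iv z = c *\<^sub>R u)"
  obtain w where w: "?C w" and wmin: "\<And>y. ?C y \<Longrightarrow> mu w \<le> mu y"
    using ex_has_least_nat[of ?C z0 mu] assms by blast
  obtain s where s: "iv w = s *\<^sub>R u" using w by blast
  have ivw0: "iv w \<noteq> 0" using w iv_eq0 by blast
  hence s0: "s \<noteq> 0" using s by auto
  have mupos: "real (mu w) > 0"
  proof -
    obtain j where "w j \<noteq> 0" using w by (auto simp: fun_eq_iff)
    hence "\<bar>real_of_int (w j)\<bar> > 0" by simp
    moreover have "\<bar>real_of_int (w j)\<bar> \<le> (\<Sum>i\<in>UNIV. \<bar>real_of_int (w i)\<bar>)"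
      by (rule member_le_sum) auto
    ultimately show ?thesis by (simp add: real_mu)
  qed
  have main: "\<exists>a::int. z = (\<lambda>i. a * w i)" if hz: "\<exists>c. iv z = c *\<^sub>R u" for z
  proof -
    obtain c where c: "iv z = c *\<^sub>R u" using hz by blast
    define a where "a = c / s"
    have za: "iv z = a *\<^sub>R iv w" using c s s0 by (simp add: a_def)
    define f where "f = \<lfloor>a\<rfloor>"
    define z' where "z' = (\<lambda>i. z i - f * w i)"
    have z'i: "real_of_int (z' i) = (a - f) * real_of_int (w i)" for i
    proof -
      have "iv z $ i = (a *\<^sub>R iv w) $ i" using za by simp
      thus ?thesis by (simp add: z'_def algebra_simps)
    qed
    have af: "0 \<le> a - f" "a - f < 1" unfolding f_def by linarith+
    have "z' = (\<lambda>_. 0)"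
    proof (rule ccontr)
      assume nz: "z' \<noteq> (\<lambda>_. 0)"
      have "iv z' = ((a - f) * s) *\<^sub>R u"
        using z'i s by (simp add: vec_eq_iff)
      hence "?C z'" using nz by blast
      hence le: "real (mu w) \<le> real (mu z')" using wmin by simp
      have "real (mu z') = (a - f) * real (mu w)"
        using af by (simp add: real_mu z'i abs_mult sum_distrib_left)
      also have "\<dots> < real (mu w)" using af mupos by simp
      finally show False using le by simp
    qed
    hence "z = (\<lambda>i. f * w i)" by (auto simp: z'_def fun_eq_iff)
    thus ?thesis by blast
  qed
  show ?thesis using that w main by blast
qed

lemma rep:
  fixes S :: "(real^'k::finite) set"
  assumes "S \<subseteq> grid n" "finite S" "card S \<ge> 2" "collinear S"
  shows "\<exists>x w T. x \<in> Gset n \<and> w \<noteq> (\<lambda>_. 0) \<and> 0 \<in> T \<and> finite T \<and> card T = card S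
          \<and> S = (\<lambda>t::nat. iv x + real t *\<^sub>R iv w) ` T"
proof -
  obtain u where u: "\<forall>x\<in>S. \<forall>y\<in>S. \<exists>c. x - y = c *\<^sub>R u" using assms(4) by (auto simp: collinear_def)
  obtain p q where pq: "p \<in> S" "q \<in> S" "p \<noteq> q"
  proof -
    have "Suc (Suc 0) \<le> card S" using assms(3) by simp
    then obtain a B where "S = insert a B" "a \<notin> B" "Suc 0 \<le> card B" "finite B"
      by (auto simp: card_le_Suc_iff)
    moreover then obtain b where "b \<in> B" by (metis card.empty ex_in_conv not_less_eq_eq le0)
    ultimately show ?thesis using that by blast
  qed
  define toz where "toz = (\<lambda>y::real^'k. (\<lambda>i. \<lfloor>y $ i\<rfloor>))"
  have tz: "iv (toz y) = y" "toz y \<in> Gset n" if "y \<in> S" for y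
    using grid_toz[of y n] assms(1) that by (auto simp: toz_def)
  define d where "d y = (\<lambda>i. toz y i - toz p i)" for y
  have ivd: "iv (d y) = y - p" if "y \<in> S" for y
    using tz[OF that] tz[OF pq(1)] by (simp add: d_def iv_diff)
  have "d q \<noteq> (\<lambda>_. 0)" using ivd[OF pq(2)] pq iv_eq0[of "d q"] by auto
  moreover have "\<exists>c. iv (d q) = c *\<^sub>R u" using ivd[OF pq(2)] u pq by auto
  ultimately obtain w where w: "w \<noteq> (\<lambda>_. 0)"
    and wl: "\<And>z. \<exists>c. iv z = c *\<^sub>R u \<Longrightarrow> \<exists>a::int. z = (\<lambda>i. a * w i)"
    by (rule lattice_line) blast
  have "\<forall>y\<in>S. \<exists>a::int. y - p = of_int a *\<^sub>R iv w"
  proof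
    fix y assume y: "y \<in> S"
    have "\<exists>c. iv (d y) = c *\<^sub>R u" using ivd[OF y] u y pq by auto
    then obtain a where "d y = (\<lambda>i. a * w i)" using wl by blast
    hence "iv (d y) = of_int a *\<^sub>R iv w" by (simp add: iv_smult)
    thus "\<exists>a::int. y - p = of_int a *\<^sub>R iv w" using ivd[OF y] by auto
  qed
  then obtain F where F: "\<And>y. y \<in> S \<Longrightarrow> y - p = of_int (F y) *\<^sub>R iv w" by metis
  have ne: "F ` S \<noteq> {}" using pq by auto
  obtain y0 where y0: "y0 \<in> S" "F y0 = Min (F ` S)"
    using Min_in[OF finite_imageI[OF assms(2)] ne] by auto
  have Fmin: "F y0 \<le> F y" if "y \<in> S" for y
    using y0(2) Min_le[OF finite_imageI[OF assms(2)]] that by auto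
  define g where "g = (\<lambda>t::nat. iv (toz y0) + real t *\<^sub>R iv w)"
  define T where "T = {t. g t \<in> S}"
  have ivw0: "iv w \<noteq> 0" using w iv_eq0 by blast
  have inj: "inj g"
    by (rule injI) (use ivw0 in \<open>auto simp: g_def\<close>)
  have SgT: "S = g ` T"
  proof (intro set_eqI iffI)
    fix y assume y: "y \<in> S"
    define t where "t = nat (F y - F y0)"
    have rt: "real t = of_int (F y - F y0)" using Fmin[OF y] by (simp add: t_def)
    have "y - y0 = (y - p) - (y0 - p)" by simp
    also have "\<dots> = of_int (F y - F y0) *\<^sub>R iv w"
      by (simp only: F[OF y] F[OF y0(1)] of_int_diff scaleR_diff_left)
    finally have "y = y0 + of_int (F y - F y0) *\<^sub>R iv w" by (simp add: algebra_simps)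
    hence "g t = y" using tz[OF y0(1)] rt by (simp add: g_def)
    thus "y \<in> g ` T" using y T_def by auto
  qed (auto simp: T_def)
  have fT: "finite T" using SgT assms(2) finite_imageD inj_on_subset[OF inj] by blast
  have "card (g ` T) = card T" by (rule card_image) (rule inj_on_subset[OF inj], simp)
  hence cT: "card T = card S" using SgT by simp
  have "0 \<in> T" using tz[OF y0(1)] y0(1) by (simp add: T_def g_def)
  thus ?thesis using w fT cT SgT tz[OF y0(1)] unfolding g_def by blast
qed

definition Box :: "nat \<Rightarrow> ('k::finite \<Rightarrow> int) set" where
  "Box m = PiE UNIV (\<lambda>_. {-int m..int m})"

definition Ann :: "nat \<Rightarrow> ('k::finite \<Rightarrow> int) set" where
  "Ann m = Box m - Box (m - 1)"

definition Tset :: "nat \<Rightarrow> nat \<Rightarrow> nat \<Rightarrow> nat set set" where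
  "Tset n r m = {T. T \<subseteq> {0..(n - 1) div m} \<and> 0 \<in> T \<and> card T = r}"

definition Aset :: "nat \<Rightarrow> nat \<Rightarrow> (('k::finite \<Rightarrow> int) \<times> nat \<times> ('k \<Rightarrow> int) \<times> nat set) set" where
  "Aset n r = Sigma (Gset n) (\<lambda>x. Sigma {1..n-1} (\<lambda>m. Sigma (Ann m) (\<lambda>w. Tset n r m)))"

definition Fmap :: "('k::finite \<Rightarrow> int) \<times> nat \<times> ('k \<Rightarrow> int) \<times> nat set \<Rightarrow> (real^'k) set" where
  "Fmap = (\<lambda>(x, m, w, T). (\<lambda>t. iv x + real t *\<^sub>R iv w) ` T)"

lemma grid_coord:
  assumes "p \<in> grid n" shows "\<exists>z::int. p $ i = of_int z \<and> 1 \<le> z \<and> z \<le> int n"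
proof -
  obtain z where "z \<in> Gset n" "p = iv z" using assms by (auto simp: grid_eq)
  thus ?thesis by (auto simp: Gset_def PiE_UNIV_domain Pi_iff)
qed

lemma Gset_coord: "x \<in> Gset n \<Longrightarrow> 1 \<le> x i \<and> x i \<le> int n"
  by (auto simp: Gset_def PiE_UNIV_domain Pi_iff)

lemma hedges_sub:
  assumes "r \<ge> 2"
  shows "hedges n r \<subseteq> Fmap ` (Aset n r :: (('k::finite \<Rightarrow> int) \<times> _) set)"
proof
  fix S :: "(real^'k) set" assume S: "S \<in> hedges n r"
  hence S1: "S \<subseteq> grid n" "card S = r" "collinear S" by (auto simp: hedges_def)
  hence fS: "finite S" using assms by (metis card.infinite not_numeral_le_zero)
  obtain x w T where xwT: "x \<in> Gset n" "w \<noteq> (\<lambda>_. 0)" "0 \<in> T" "finite T" "card T = r"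
    "S = (\<lambda>t::nat. iv x + real t *\<^sub>R iv w) ` T"
    using rep[OF S1(1) fS _ S1(3)] S1(2) assms by auto
  define m where "m = Max (range (\<lambda>i. nat \<bar>w i\<bar>))"
  have fr: "finite (range (\<lambda>i. nat \<bar>w i\<bar>))" by simp
  have "m \<in> range (\<lambda>i. nat \<bar>w i\<bar>)" using Max_in[OF fr] by (simp add: m_def)
  then obtain i0 where i0: "nat \<bar>w i0\<bar> = m" by auto
  have wle: "nat \<bar>w i\<bar> \<le> m" for i using Max_ge[OF fr] m_def by auto
  obtain j where "w j \<noteq> 0" using xwT(2) by (auto simp: fun_eq_iff)
  hence m1: "m \<ge> 1" using wle[of j] by linarith
  have tm: "t * m \<le> n - 1" if t: "t \<in> T" for t
  proof -
    have "iv x + real t *\<^sub>R iv w \<in> grid n" using xwT(6) S1(1) t by auto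
    then obtain z :: int where z: "(iv x + real t *\<^sub>R iv w) $ i0 = of_int z" "1 \<le> z" "z \<le> int n"
      using grid_coord by blast
    have "of_int z = real_of_int (x i0) + real t * of_int (w i0)" using z(1) by simp
    hence "z = x i0 + int t * w i0" by (metis of_int_eq_iff of_int_add of_int_mult of_int_of_nat_eq)
    hence "\<bar>int t * w i0\<bar> \<le> int n - 1" using z Gset_coord[OF xwT(1), of i0] by linarith
    moreover have "int m = \<bar>w i0\<bar>" using i0 by auto
    ultimately have "int (t * m) \<le> int n - 1" by (simp add: abs_mult)
    thus ?thesis by linarith
  qed
  have "T \<subseteq> {0..(n - 1) div m}"
  proof
    fix t assume "t \<in> T"
    hence "t * m \<le> n - 1" by (rule tm)
    thus "t \<in> {0..(n - 1) div m}" using m1 by (simp add: less_eq_div_iff_mult_less_eq)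
  qed
  hence TT: "T \<in> Tset n r m" using xwT by (simp add: Tset_def)
  obtain t where "t \<in> T" "t \<noteq> 0"
  proof -
    have "T \<noteq> {0}" using xwT(5) assms by auto
    thus ?thesis using that xwT(3) by blast
  qed
  hence "t * m \<le> n - 1" "t \<ge> 1" using tm[of t] by auto
  hence mn: "m \<le> n - 1" using mult_le_mono1[of 1 t m] by linarith
  have wA: "w \<in> Ann m"
  proof -
    have wle': "\<bar>w i\<bar> \<le> int m" for i using wle[of i] by (simp add: nat_le_iff)
    have "w \<in> Box m" unfolding Box_def PiE_UNIV_domain
    proof (intro Pi_I)
      fix i show "w i \<in> {- int m..int m}" using wle'[of i] by (simp add: abs_le_iff)
    qed
    moreover have "w \<notin> Box (m - 1)"
      using i0 m1 by (auto simp: Box_def PiE_UNIV_domain Pi_iff intro!: exI[of _ i0])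
    ultimately show ?thesis by (simp add: Ann_def)
  qed
  have "(x, m, w, T) \<in> Aset n r" using xwT(1) m1 mn wA TT by (simp add: Aset_def)
  moreover have "S = Fmap (x, m, w, T)" using xwT(6) by (simp add: Fmap_def)
  ultimately show "S \<in> Fmap ` Aset n r" by blast
qed

lemma finite_Box: "finite (Box m :: ('k::finite \<Rightarrow> int) set)"
  by (simp add: Box_def finite_PiE)

lemma card_Box: "card (Box m :: ('k::finite \<Rightarrow> int) set) = (2*m+1) ^ CARD('k)"
proof -
  have "nat (2 * int m + 1) = 2 * m + 1" by linarith
  thus ?thesis by (simp add: Box_def card_PiE)
qed

lemma Box_mono: "m' \<le> m \<Longrightarrow> Box m' \<subseteq> (Box m :: ('k::finite \<Rightarrow> int) set)"
proof (intro subsetI)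
  fix t :: "'k \<Rightarrow> int" assume m: "m' \<le> m" and "t \<in> Box m'"
  hence h: "- int m' \<le> t x \<and> t x \<le> int m'" for x by (auto simp: Box_def PiE_UNIV_domain Pi_iff)
  show "t \<in> Box m" unfolding Box_def PiE_UNIV_domain
  proof (intro Pi_I)
    fix x show "t x \<in> {- int m..int m}" using h[of x] m by auto
  qed
qed

lemma card_Ann: "m \<ge> 1 \<Longrightarrow> real (card (Ann m :: ('k::finite \<Rightarrow> int) set)) = (2*real m+1) ^ CARD('k) - (2*real m - 1) ^ CARD('k)"
proof -
  assume m: "m \<ge> 1"
  have "card (Ann m :: ('k \<Rightarrow> int) set) = card (Box m :: ('k \<Rightarrow> int) set) - card (Box (m-1) :: ('k \<Rightarrow> int) set)"
    unfolding Ann_def by (rule card_Diff_subset) (auto simp: finite_Box Box_mono)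
  moreover have "card (Box (m-1) :: ('k \<Rightarrow> int) set) \<le> card (Box m :: ('k \<Rightarrow> int) set)"
    by (rule card_mono) (auto simp: finite_Box Box_mono)
  ultimately have "real (card (Ann m :: ('k \<Rightarrow> int) set)) = real ((2*m+1) ^ CARD('k)) - real ((2*(m-1)+1) ^ CARD('k))"
    by (simp add: card_Box of_nat_diff)
  moreover have "real ((2*(m-1)+1) ^ CARD('k)) = (2*real m - 1) ^ CARD('k)" using m by (simp add: of_nat_diff)
  moreover have "real ((2*m+1) ^ CARD('k)) = (2*real m + 1) ^ CARD('k)" by (simp add: add.commute)
  ultimately show ?thesis by simp
qed

lemma finite_Tset: "finite (Tset n r m)"
  by (rule finite_subset[of _ "Pow {0..(n - 1) div m}"]) (auto simp: Tset_def)

lemma card_Tset: "r \<ge> 1 \<Longrightarrow> card (Tset n r m) \<le> ((n - 1) div m) choose (r - 1)"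
proof -
  assume r: "r \<ge> 1"
  define q where "q = (n - 1) div m"
  have "Tset n r m \<subseteq> insert 0 ` {U. U \<subseteq> {1..q} \<and> card U = r - 1}"
  proof
    fix T assume "T \<in> Tset n r m"
    hence T: "T \<subseteq> {0..q}" "0 \<in> T" "card T = r" by (auto simp: Tset_def q_def)
    have fT: "finite T" using T(1) finite_subset by blast
    have "T - {0} \<subseteq> {1..q}" using T(1) by auto
    moreover have "card (T - {0}) = r - 1" using T fT by simp
    moreover have "T = insert 0 (T - {0})" using T(2) by auto
    ultimately show "T \<in> insert 0 ` {U. U \<subseteq> {1..q} \<and> card U = r - 1}" by blast
  qed
  hence "card (Tset n r m) \<le> card (insert 0 ` {U. U \<subseteq> {1..q} \<and> card U = r - 1})"
    by (intro card_mono finite_imageI) (auto simp: n_subsets)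
  also have "\<dots> \<le> card {U. U \<subseteq> {1..q} \<and> card U = r - 1}" by (rule card_image_le) (simp)
  also have "\<dots> = q choose (r - 1)" by (simp add: n_subsets)
  finally show ?thesis by (simp add: q_def)
qed

lemma card_Aset:
  "card (Aset n r :: (('k::finite \<Rightarrow> int) \<times> _) set) =
     n ^ CARD('k) * (\<Sum>m\<in>{1..n-1}. card (Ann m :: ('k \<Rightarrow> int) set) * card (Tset n r m))"
proof -
  have fA: "finite (Ann m :: ('k \<Rightarrow> int) set)" for m by (simp add: Ann_def finite_Box)
  have "card (Aset n r :: (('k::finite \<Rightarrow> int) \<times> _) set) =
     (\<Sum>x\<in>(Gset n :: ('k \<Rightarrow> int) set). \<Sum>m\<in>{1..n-1}. \<Sum>w\<in>(Ann m :: ('k \<Rightarrow> int) set). card (Tset n r m))"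
    unfolding Aset_def
    by (simp add: card_SigmaI finite_Gset fA finite_Tset finite_SigmaI)
  thus ?thesis by (simp add: card_Gset)
qed

lemma pdiff:
  fixes a b :: real
  assumes "0 \<le> b" "b \<le> a"
  shows "a ^ k - b ^ k \<le> real k * a ^ (k - 1) * (a - b)"
proof (induction k)
  case 0 thus ?case by simp
next
  case (Suc k)
  have "a ^ Suc k - b ^ Suc k = a * (a ^ k - b ^ k) + b ^ k * (a - b)" by (simp add: algebra_simps)
  also have "\<dots> \<le> a * (real k * a ^ (k - 1) * (a - b)) + a ^ k * (a - b)"
    using Suc assms by (intro add_mono mult_left_mono mult_right_mono power_mono) auto
  also have "\<dots> = real (Suc k) * a ^ k * (a - b)"
    by (cases k) (auto simp: algebra_simps)
  finally show ?case by simp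
qed

lemma UB0:
  assumes "r \<ge> 2"
  shows "real (card (hedges n r :: (real^'k::finite) set set)) \<le>
    real n ^ CARD('k) * (\<Sum>m\<in>{1..n-1}. ((2*real m+1) ^ CARD('k) - (2*real m - 1) ^ CARD('k))
        * real (((n - 1) div m) choose (r - 1)))"
proof -
  have "card (hedges n r :: (real^'k) set set) \<le> card (Fmap ` (Aset n r :: (('k \<Rightarrow> int) \<times> _) set))"
    by (rule card_mono[OF finite_imageI hedges_sub[OF assms]])
      (simp add: Aset_def finite_Gset Ann_def finite_Box finite_Tset finite_SigmaI)
  also have "\<dots> \<le> card (Aset n r :: (('k \<Rightarrow> int) \<times> _) set)" by (rule card_image_le)
      (simp add: Aset_def finite_Gset Ann_def finite_Box finite_Tset finite_SigmaI)
  also have "\<dots> \<le> n ^ CARD('k) * (\<Sum>m\<in>{1..n-1}. card (Ann m :: ('k \<Rightarrow> int) set) * (((n - 1) div m) choose (r - 1)))"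
    unfolding card_Aset using assms
    by (intro mult_left_mono sum_mono mult_left_mono card_Tset) auto
  finally have "real (card (hedges n r :: (real^'k) set set)) \<le> real (n ^ CARD('k) * (\<Sum>m\<in>{1..n-1}. card (Ann m :: ('k \<Rightarrow> int) set) * (((n - 1) div m) choose (r - 1))))"
    by (rule of_nat_mono)
  also have "\<dots> = real n ^ CARD('k) * (\<Sum>m\<in>{1..n-1}. ((2*real m+1) ^ CARD('k) - (2*real m - 1) ^ CARD('k))
        * real (((n - 1) div m) choose (r - 1)))"
    by (simp add: of_nat_sum card_Ann)
  finally show ?thesis .
qed

lemma binom_real_le:
  assumes "m \<ge> 1" 
  shows "real (((n - 1) div m) choose s) \<le> (real n / real m) ^ s / fact s"
proof -
  define q where "q = (n - 1) div m"
  have "(q choose s) * fact s \<le> q ^ s" by (rule binomial_fact_pow)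
  hence "real (q choose s) * fact s \<le> real q ^ s"
    by (metis of_nat_fact of_nat_le_iff of_nat_mult of_nat_power)
  hence a: "real (q choose s) \<le> real q ^ s / fact s" by (simp add: field_simps)
  have "q * m \<le> n" unfolding q_def
    using div_times_less_eq_dividend[of "n - 1" m] by linarith
  hence "real q * real m \<le> real n" by (metis of_nat_le_iff of_nat_mult)
  hence "real q \<le> real n / real m" using assms by (simp add: field_simps)
  hence "real q ^ s \<le> (real n / real m) ^ s" by (intro power_mono) auto
  hence "real q ^ s / fact s \<le> (real n / real m) ^ s / fact s" by (simp add: divide_right_mono)
  thus ?thesis using a by (simp add: q_def)
qed

lemma UB1:
  assumes "r \<ge> 2"
  shows "real (card (hedges n r :: (real^'k::finite) set set)) \<le>
    2 * real CARD('k) * real n ^ (CARD('k) + r - 1) / fact (r - 1) *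
    (\<Sum>m\<in>{1..n-1}. (2*real m+1) ^ (CARD('k) - 1) / real m ^ (r - 1))"
proof -
  let ?k = "CARD('k)"
  have hterm: "((2*real m+1) ^ ?k - (2*real m - 1) ^ ?k) * real (((n - 1) div m) choose (r - 1))
      \<le> 2 * real ?k * real n ^ (r - 1) / fact (r - 1) * ((2*real m+1) ^ (?k - 1) / real m ^ (r - 1))"
    if m: "m \<in> {1..n-1}" for m
  proof -
    have m1: "real m \<ge> 1" using m by auto
    have "(2*real m+1) ^ ?k - (2*real m - 1) ^ ?k \<le> real ?k * (2*real m+1) ^ (?k - 1) * 2"
      using pdiff[of "2*real m - 1" "2*real m+1" ?k] m1 by simp
    moreover have "real (((n - 1) div m) choose (r - 1)) \<le> (real n / real m) ^ (r - 1) / fact (r - 1)"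
      using binom_real_le m by auto
    moreover have "0 \<le> (2*real m+1) ^ ?k - (2*real m - 1) ^ ?k"
      using m1 by (intro diff_ge_0_iff_ge[THEN iffD2] power_mono) auto
    ultimately have "((2*real m+1) ^ ?k - (2*real m - 1) ^ ?k) * real (((n - 1) div m) choose (r - 1))
      \<le> (real ?k * (2*real m+1) ^ (?k - 1) * 2) * ((real n / real m) ^ (r - 1) / fact (r - 1))"
      by (intro mult_mono) auto
    also have "\<dots> = 2 * real ?k * real n ^ (r - 1) / fact (r - 1) * ((2*real m+1) ^ (?k - 1) / real m ^ (r - 1))"
      by (simp add: power_divide field_simps)
    finally show ?thesis .
  qed
  have "real (card (hedges n r :: (real^'k::finite) set set)) \<le>
    real n ^ ?k * (\<Sum>m\<in>{1..n-1}. ((2*real m+1) ^ ?k - (2*real m - 1) ^ ?k)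
        * real (((n - 1) div m) choose (r - 1)))" by (rule UB0[OF assms])
  also have "\<dots> \<le> real n ^ ?k * (\<Sum>m\<in>{1..n-1}. 2 * real ?k * real n ^ (r - 1) / fact (r - 1) * ((2*real m+1) ^ (?k - 1) / real m ^ (r - 1)))"
    by (intro mult_left_mono sum_mono hterm) auto
  also have "\<dots> = 2 * real ?k * (real n ^ ?k * real n ^ (r - 1)) / fact (r - 1) *
    (\<Sum>m\<in>{1..n-1}. (2*real m+1) ^ (?k - 1) / real m ^ (r - 1))"
    by (simp add: sum_distrib_left mult_ac)
  also have "real n ^ ?k * real n ^ (r - 1) = real n ^ (?k + r - 1)"
    using assms by (simp add: power_add[symmetric])
  finally show ?thesis .
qed

lemma harm_le: "N \<ge> 1 \<Longrightarrow> (\<Sum>m\<in>{1..N}. 1 / real m) \<le> 1 + ln (real N)"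
proof (induction N rule: nat_induct_at_least)
  case base thus ?case by simp
next
  case (Suc N)
  have N: "real N \<ge> 1" using Suc by simp
  have "ln (real N / real (Suc N)) \<le> real N / real (Suc N) - 1"
    by (rule ln_le_minus_one) (use N in auto)
  hence "1 / real (Suc N) \<le> ln (real (Suc N)) - ln (real N)"
    using N by (simp add: ln_div field_simps)
  moreover have "(\<Sum>m\<in>{1..Suc N}. 1 / real m) = (\<Sum>m\<in>{1..N}. 1 / real m) + 1 / real (Suc N)"
    by simp
  ultimately show ?case using Suc by linarith
qed

lemma sq_sum_le: "N \<ge> 1 \<Longrightarrow> (\<Sum>m\<in>{1..N}. 1 / real m ^ 2) \<le> 2 - 1 / real N"
proof (induction N rule: nat_induct_at_least)
  case base thus ?case by simp
next
  case (Suc N)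
  have N: "real N \<ge> 1" using Suc by simp
  have "1 / real (Suc N) ^ 2 \<le> 1 / (real N * real (Suc N))"
    using N by (intro divide_left_mono) (auto simp: power2_eq_square intro: mult_right_mono)
  also have "\<dots> = 1 / real N - 1 / real (Suc N)" using N by (simp add: field_simps)
  finally have "1 / real (Suc N) ^ 2 \<le> 1 / real N - 1 / real (Suc N)" .
  moreover have "(\<Sum>m\<in>{1..Suc N}. 1 / real m ^ 2) = (\<Sum>m\<in>{1..N}. 1 / real m ^ 2) + 1 / real (Suc N) ^ 2"
    by simp
  ultimately show ?case using Suc by linarith
qed

lemma exp_half_le: "exp (1/2 :: real) \<le> 2"
proof -
  have "exp (1/2 :: real) ^ 2 = exp 1" by (simp add: exp_of_nat_mult[symmetric])
  also have "\<dots> \<le> 2 ^ 2" using exp_le by simp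
  finally show ?thesis by (rule power2_le_imp_le) simp
qed

lemma near_pow:
  fixes m :: real
  assumes "m \<ge> real k" "m \<ge> 1"
  shows "(2*m+1) ^ (k - 1) \<le> 2 * (2*m) ^ (k - 1)"
proof -
  have "(1 + 1/(2*m)) ^ (k - 1) \<le> exp (1/(2*m)) ^ (k - 1)"
    using assms by (intro power_mono) (auto simp: add.commute exp_ge_add_one_self)
  also have "\<dots> = exp (real (k - 1) * (1/(2*m)))" by (simp add: exp_of_nat_mult[symmetric])
  also have "\<dots> \<le> exp (1/2)"
  proof -
    have "real (k - 1) \<le> m" using assms by linarith
    hence "real (k - 1) * (1/(2*m)) \<le> 1/2" using assms by (simp add: field_simps)
    thus ?thesis by simp
  qed
  also have "\<dots> \<le> 2" by (rule exp_half_le)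
  finally have h: "(1 + 1/(2*m)) ^ (k - 1) \<le> 2" .
  have "(2*m+1) = (2*m) * (1 + 1/(2*m))" using assms by (simp add: field_simps)
  hence "(2*m+1) ^ (k - 1) = (2*m) ^ (k - 1) * (1 + 1/(2*m)) ^ (k - 1)" by (simp add: power_mult_distrib)
  also have "\<dots> \<le> (2*m) ^ (k - 1) * 2" using h assms by (intro mult_left_mono) auto
  finally show ?thesis by simp
qed

lemma three_four: "(k+1) * 3 ^ k \<le> 2 * (4::nat) ^ k"
proof (induction k)
  case 0 thus ?case by simp
next
  case (Suc k)
  show ?case
  proof (cases "k \<ge> 2")
    case True
    have "(Suc k + 1) * 3 ^ Suc k = 3 * (k + 2) * 3 ^ k" by (simp add: algebra_simps)
    also have "\<dots> \<le> 4 * (k + 1) * 3 ^ k" using True by (intro mult_right_mono) auto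
    also have "\<dots> = 4 * ((k + 1) * 3 ^ k)" by (simp add: algebra_simps)
    also have "\<dots> \<le> 4 * (2 * 4 ^ k)" using Suc.IH by (rule mult_left_mono) simp
    finally show ?thesis by simp
  next
    case False
    hence "k = 0 \<or> k = 1" by auto
    thus ?thesis by auto
  qed
qed

lemma eight_r: "r \<ge> 3 \<Longrightarrow> 8 * r \<le> 3 * (2::nat) ^ r"
proof (induction r rule: nat_induct_at_least)
  case base thus ?case by simp
next
  case (Suc r) thus ?case by simp
qed

lemma kk_half: "k \<ge> 3 \<Longrightarrow> 2 * (k + 1) \<le> (2::nat) ^ k"
proof (induction k rule: nat_induct_at_least)
  case base thus ?case by simp
next
  case (Suc k) thus ?case by simp
qed

lemma r_three0: "k \<ge> 1 \<Longrightarrow> (k + 2 + d) * 3 ^ (k - 1) \<le> (2::nat) ^ (2 * k + 1 + d)"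
proof (induction d)
  case 0
  have "(k + 2) * 3 ^ (k - 1) \<le> (k + 1) * 3 ^ k"
    using 0 by (cases k) auto
  also have "\<dots> \<le> 2 * 4 ^ k" by (rule three_four)
  also have "\<dots> = 2 ^ (2 * k + 1)"
    by (simp add: power_mult)
  finally show ?case by simp
next
  case (Suc d)
  have "(k + 2 + Suc d) * 3 ^ (k - 1) \<le> 2 * ((k + 2 + d) * 3 ^ (k - 1))" by simp
  also have "\<dots> \<le> 2 * 2 ^ (2 * k + 1 + d)" using Suc by simp
  finally show ?case by simp
qed

lemma r_three:
  assumes "k \<ge> 1" "r \<ge> k + 2" shows "r * 3 ^ (k - 1) \<le> (2::nat) ^ (r + k - 1)"
proof -
  define d where "d = r - k - 2"
  have r: "k + 2 + d = r" using assms by (simp add: d_def)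
  have e: "2 * k + 1 + d = r + k - 1" using assms by (simp add: d_def)
  have "(k + 2 + d) * 3 ^ (k - 1) \<le> (2::nat) ^ (2 * k + 1 + d)" by (rule r_three0) (fact assms)
  thus ?thesis by (simp only: r e)
qed

lemma sum_if_le:
  fixes c :: real
  assumes "c \<ge> 0"
  shows "(\<Sum>m\<in>{1..N}. if m < k then c else 0) \<le> real k * c"
proof -
  have "(\<Sum>m\<in>{1..N}. if m < k then c else 0) = (\<Sum>m\<in>{1..N} \<inter> {m. m < k}. c)"
    by (subst sum.inter_restrict) auto
  also have "\<dots> = real (card ({1..N} \<inter> {m. m < k})) * c" by simp
  also have "card ({1..N} \<inter> {m. m < k}) \<le> card {..<k}" by (rule card_mono) auto
  hence "real (card ({1..N} \<inter> {m. m < k})) * c \<le> real k * c"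
    using assms by (intro mult_right_mono) auto
  finally show ?thesis .
qed

lemma pow_split:
  fixes m :: real
  assumes "m \<ge> 1" "k \<ge> 1"
  shows "(2*m+1) ^ (k - 1) \<le> (if real k \<le> m then 2 ^ k * m ^ (k - 1) else 3 ^ (k - 1) * m ^ (k - 1))"
proof (cases "real k \<le> m")
  case True
  have "(2*m+1) ^ (k - 1) \<le> 2 * (2*m) ^ (k - 1)" by (rule near_pow) (use True assms in auto)
  also have "\<dots> = 2 ^ k * m ^ (k - 1)" using assms
    by (cases k) (auto simp: power_mult_distrib)
  finally show ?thesis using True by simp
next
  case False
  have "(2*m+1) ^ (k - 1) \<le> (3*m) ^ (k - 1)" using assms by (intro power_mono) auto
  thus ?thesis using False by (simp add: power_mult_distrib)
qed

lemma case1_sum: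
  fixes n k r :: nat
  assumes "n \<ge> 3" "k \<ge> 3" "r \<ge> 3" "r \<le> k" "8 ^ k \<le> real n"
  shows "(\<Sum>m\<in>{1..n-1}. (2*real m+1) ^ (k - 1) / real m ^ (r - 1))
          \<le> real n ^ (k - r) * (4/3 * 2 ^ k * real n)"
proof -
  let ?P = "real n ^ (k - r)"
  have P0: "?P \<ge> 0" by simp
  have ht: "(2*real m+1) ^ (k - 1) / real m ^ (r - 1) \<le> 2 ^ k * ?P + (if m < k then 3 ^ (k - 1) * ?P else 0)"
    if m: "m \<in> {1..n-1}" for m
  proof -
    have m1: "real m \<ge> 1" "real m \<le> real n" using m by auto
    have pd: "real m ^ (k - 1) / real m ^ (r - 1) = real m ^ (k - r)"
      using power_diff[of "real m" "r - 1" "k - 1"] m1 assms by (simp add: diff_diff_eq)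
    have mP: "real m ^ (k - r) \<le> ?P" using m1 by (intro power_mono) auto
    show ?thesis
    proof (cases "real k \<le> real m")
      case True
      hence "(2*real m+1) ^ (k - 1) \<le> 2 ^ k * real m ^ (k - 1)" using pow_split[of "real m" k] m1 assms by simp
      hence "(2*real m+1) ^ (k - 1) / real m ^ (r - 1) \<le> 2 ^ k * real m ^ (k - 1) / real m ^ (r - 1)"
        using m1 by (intro divide_right_mono) auto
      also have "\<dots> = 2 ^ k * real m ^ (k - r)" using pd by (metis times_divide_eq_right)
      also have "\<dots> \<le> 2 ^ k * ?P" using mP by simp
      finally show ?thesis using True by simp
    next
      case False
      hence "(2*real m+1) ^ (k - 1) \<le> 3 ^ (k - 1) * real m ^ (k - 1)" using pow_split[of "real m" k] m1 assms by simp
      hence "(2*real m+1) ^ (k - 1) / real m ^ (r - 1) \<le> 3 ^ (k - 1) * real m ^ (k - 1) / real m ^ (r - 1)"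
        using m1 by (intro divide_right_mono) auto
      also have "\<dots> = 3 ^ (k - 1) * real m ^ (k - r)" using pd by (metis times_divide_eq_right)
      also have "\<dots> \<le> 3 ^ (k - 1) * ?P" using mP by simp
      finally have "(2*real m+1) ^ (k - 1) / real m ^ (r - 1) \<le> 3 ^ (k - 1) * ?P" .
      moreover have "0 \<le> 2 ^ k * ?P" using P0 by simp
      moreover have "m < k" using False by simp
      ultimately show ?thesis by (simp add: add_increasing)
    qed
  qed
  have "(\<Sum>m\<in>{1..n-1}. (2*real m+1) ^ (k - 1) / real m ^ (r - 1))
     \<le> (\<Sum>m\<in>{1..n-1}. 2 ^ k * ?P + (if m < k then 3 ^ (k - 1) * ?P else 0))"
    by (rule sum_mono) (rule ht)
  also have "\<dots> = real (n - 1) * (2 ^ k * ?P) + (\<Sum>m\<in>{1..n-1}. if m < k then 3 ^ (k - 1) * ?P else 0)"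
    by (simp add: sum.distrib)
  also have "\<dots> \<le> real (n - 1) * (2 ^ k * ?P) + real k * (3 ^ (k - 1) * ?P)"
    by (intro add_left_mono sum_if_le) simp
  also have "\<dots> \<le> ?P * (4/3 * 2 ^ k * real n)"
  proof -
    have "k \<le> 2 ^ k" by (simp add: less_imp_le)
    hence "real k * 3 ^ k \<le> 2 ^ k * 3 ^ k"
      by (intro mult_right_mono) (auto simp: of_nat_le_iff[symmetric])
    also have "\<dots> = 6 ^ k" by (simp add: power_mult_distrib[symmetric])
    also have "\<dots> \<le> 8 ^ k" by (intro power_mono) auto
    also have "\<dots> \<le> real n" by (rule assms)
    finally have "real k * 3 ^ k \<le> real n" .
    hence a: "real k * 3 ^ (k - 1) \<le> real n / 3" using assms
      by (cases k) (auto simp: field_simps)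
    have "(1::real) \<le> 2 ^ k" by simp
    hence "real n * 1 \<le> real n * 2 ^ k" by (intro mult_left_mono) auto
    hence "real n / 3 \<le> 2 ^ k * real n / 3" by (simp add: field_simps)
    hence "real k * 3 ^ (k - 1) \<le> 2 ^ k * real n / 3" using a by linarith
    moreover have "real (n - 1) * 2 ^ k \<le> real n * 2 ^ k" by (intro mult_right_mono) auto
    moreover have "4/3 * 2 ^ k * real n = real n * 2 ^ k + 2 ^ k * real n / 3" by (simp add: field_simps)
    ultimately have "real (n - 1) * 2 ^ k + real k * 3 ^ (k - 1) \<le> 4/3 * 2 ^ k * real n"
      by linarith
    hence "?P * (real (n - 1) * 2 ^ k + real k * 3 ^ (k - 1)) \<le> ?P * (4/3 * 2 ^ k * real n)"
      by (intro mult_left_mono) simp_all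
    thus ?thesis by (simp add: algebra_simps)
  qed
  finally show ?thesis by simp
qed

lemma case1:
  fixes n r :: nat
  assumes "n \<ge> 3" "CARD('k::finite) \<ge> 3" "r \<ge> 3" "r \<le> CARD('k)" "8 ^ CARD('k) \<le> real n"
  shows "real (card (hedges n r :: (real^'k) set set)) \<le> real CARD('k) * 2 ^ (r + CARD('k)) / fact r * real n ^ (2 * CARD('k))"
proof -
  let ?k = "CARD('k)"
  let ?S = "\<Sum>m\<in>{1..n-1}. (2*real m+1) ^ (?k - 1) / real m ^ (r - 1)"
  have "real (card (hedges n r :: (real^'k) set set)) \<le> 2 * real ?k * real n ^ (?k + r - 1) / fact (r - 1) * ?S"
    by (rule UB1) (use assms in simp)
  also have "\<dots> \<le> 2 * real ?k * real n ^ (?k + r - 1) / fact (r - 1) * (real n ^ (?k - r) * (4/3 * 2 ^ ?k * real n))"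
    by (intro mult_left_mono case1_sum assms) auto
  also have "\<dots> = 8/3 * real ?k * 2 ^ ?k / fact (r - 1) * (real n ^ (?k + r - 1) * real n ^ (?k - r) * real n)"
    by (simp add: mult_ac)
  also have "real n ^ (?k + r - 1) * real n ^ (?k - r) * real n = real n ^ (2 * ?k)"
  proof -
    have "(?k + r - 1) + (?k - r) + 1 = 2 * ?k" using assms by simp
    thus ?thesis by (metis power_add power_one_right)
  qed
  also have "8/3 * real ?k * 2 ^ ?k / fact (r - 1) \<le> real ?k * 2 ^ (r + ?k) / fact r"
  proof -
    have fr: "(fact r :: real) = real r * fact (r - 1)" using assms by (simp add: fact_reduce)
    have "8 * r \<le> 3 * 2 ^ r" using eight_r assms by simp
    hence "real (8 * r) \<le> real (3 * 2 ^ r)" by (rule of_nat_mono)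
    hence "8 * real r \<le> 3 * 2 ^ r" by simp
    hence "8/3 * real r \<le> 2 ^ r" by simp
    hence "(real ?k * 2 ^ ?k) * (8/3 * real r) \<le> (real ?k * 2 ^ ?k) * 2 ^ r" by (intro mult_left_mono) auto
    hence h: "8/3 * real ?k * 2 ^ ?k * real r \<le> real ?k * 2 ^ (r + ?k)" by (simp add: power_add mult_ac)
    have rpos: "real r > 0" using assms by simp
    have "8/3 * real ?k * 2 ^ ?k / fact (r - 1) = (8/3 * real ?k * 2 ^ ?k * real r) / fact r"
      using rpos by (simp add: fr)
    also have "\<dots> \<le> real ?k * 2 ^ (r + ?k) / fact r" using h by (intro divide_right_mono) auto
    finally show ?thesis .
  qed
  hence "8/3 * real ?k * 2 ^ ?k / fact (r - 1) * real n ^ (2 * ?k) \<le> real ?k * 2 ^ (r + ?k) / fact r * real n ^ (2 * ?k)"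
    by (intro mult_right_mono) auto
  finally show ?thesis .
qed

lemma ln_le_log2: "x \<ge> 1 \<Longrightarrow> ln x \<le> log 2 x"
proof -
  assume x: "x \<ge> 1"
  have l2: "0 < ln (2::real)" "ln (2::real) < 1" using ln_2_less_1 by auto
  have "ln x \<ge> 0" using x by simp
  hence "ln x * ln 2 \<le> ln x * 1" using l2 by (intro mult_left_mono) auto
  thus ?thesis using l2 by (simp add: log_def field_simps)
qed

lemma case2_sum:
  fixes n k :: nat
  assumes "n \<ge> 3" "k \<ge> 3" "100 * real k \<le> log 2 (real n)"
  shows "real (k + 1) * (\<Sum>m\<in>{1..n-1}. (2*real m+1) ^ (k - 1) / real m ^ k) \<le> 4 ^ k * log 2 (real n)"
proof -
  let ?L = "log 2 (real n)"
  have ht: "(2*real m+1) ^ (k - 1) / real m ^ k \<le> 2 ^ k * (1 / real m) + (if m < k then 3 ^ (k - 1) else 0)"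
    if m: "m \<in> {1..n-1}" for m
  proof -
    have m1: "real m \<ge> 1" using m by auto
    have pd: "real m ^ (k - 1) / real m ^ k = 1 / real m"
    proof -
      have "real m ^ k = real m ^ (k - 1) * real m" using assms by (cases k) auto
      thus ?thesis using m1 by simp
    qed
    have mpos: "0 \<le> 2 ^ k * (1 / real m)" using m1 by simp
    show ?thesis
    proof (cases "real k \<le> real m")
      case True
      hence "(2*real m+1) ^ (k - 1) \<le> 2 ^ k * real m ^ (k - 1)" using pow_split[of "real m" k] m1 assms by simp
      hence "(2*real m+1) ^ (k - 1) / real m ^ k \<le> 2 ^ k * real m ^ (k - 1) / real m ^ k"
        using m1 by (intro divide_right_mono) auto
      also have "\<dots> = 2 ^ k * (1 / real m)" using pd by (metis times_divide_eq_right)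
      finally show ?thesis using True by simp
    next
      case False
      hence "(2*real m+1) ^ (k - 1) \<le> 3 ^ (k - 1) * real m ^ (k - 1)" using pow_split[of "real m" k] m1 assms by simp
      hence "(2*real m+1) ^ (k - 1) / real m ^ k \<le> 3 ^ (k - 1) * real m ^ (k - 1) / real m ^ k"
        using m1 by (intro divide_right_mono) auto
      also have "\<dots> = 3 ^ (k - 1) * (1 / real m)" using pd by (metis times_divide_eq_right)
      also have "\<dots> \<le> 3 ^ (k - 1)" using m1 by (simp add: field_simps)
      finally have "(2*real m+1) ^ (k - 1) / real m ^ k \<le> 3 ^ (k - 1)" .
      moreover have "m < k" using False by simp
      ultimately show ?thesis using mpos by (simp add: add_increasing)
    qed
  qed
  have "(\<Sum>m\<in>{1..n-1}. (2*real m+1) ^ (k - 1) / real m ^ k)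
     \<le> (\<Sum>m\<in>{1..n-1}. 2 ^ k * (1 / real m) + (if m < k then 3 ^ (k - 1) else 0))"
    by (rule sum_mono) (rule ht)
  also have "\<dots> = 2 ^ k * (\<Sum>m\<in>{1..n-1}. 1 / real m) + (\<Sum>m\<in>{1..n-1}. if m < k then 3 ^ (k - 1) else 0)"
    by (simp add: sum.distrib sum_distrib_left)
  also have "\<dots> \<le> 2 ^ k * (1 + ?L) + real k * 3 ^ (k - 1)"
  proof -
    have "(\<Sum>m\<in>{1..n-1}. 1 / real m) \<le> 1 + ln (real (n - 1))" using assms by (intro harm_le) auto
    also have "ln (real (n - 1)) \<le> ln (real n)" using assms by simp
    also have "ln (real n) \<le> ?L" using assms by (intro ln_le_log2) auto
    finally have "(\<Sum>m\<in>{1..n-1}. 1 / real m) \<le> 1 + ?L" by simp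
    hence "2 ^ k * (\<Sum>m\<in>{1..n-1}. 1 / real m) \<le> 2 ^ k * (1 + ?L)" by (intro mult_left_mono) auto
    moreover have "(\<Sum>m\<in>{1..n-1}. if m < k then (3::real) ^ (k - 1) else 0) \<le> real k * 3 ^ (k - 1)"
      by (intro sum_if_le) simp
    ultimately show ?thesis by linarith
  qed
  finally have S: "(\<Sum>m\<in>{1..n-1}. (2*real m+1) ^ (k - 1) / real m ^ k) \<le> 2 ^ k * (1 + ?L) + real k * 3 ^ (k - 1)" .
  have a: "real (k + 1) * 2 ^ k \<le> 4 ^ k / 2"
  proof -
    have "2 * (k + 1) \<le> 2 ^ k" using kk_half assms by simp
    hence "real (2 * (k + 1)) \<le> real (2 ^ k)" by (rule of_nat_mono)
    hence "2 * real (k + 1) \<le> 2 ^ k" by simp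
    hence "2 * real (k + 1) * 2 ^ k \<le> 2 ^ k * 2 ^ k" by (intro mult_right_mono) auto
    also have "(2::real) ^ k * 2 ^ k = 4 ^ k" by (simp add: power_mult_distrib[symmetric])
    finally have "2 * (real (k + 1) * 2 ^ k) \<le> 4 ^ k" by (simp add: algebra_simps)
    thus ?thesis by simp
  qed
  have b: "real (k + 1) * 3 ^ (k - 1) \<le> 2/3 * 4 ^ k"
  proof -
    have "(k + 1) * 3 ^ k \<le> 2 * 4 ^ k" by (rule three_four)
    hence "real ((k + 1) * 3 ^ k) \<le> real (2 * 4 ^ k)" by (rule of_nat_mono)
    hence "real (k + 1) * 3 ^ k \<le> 2 * 4 ^ k" by (simp add: algebra_simps)
    moreover have "(3::real) ^ k = 3 * 3 ^ (k - 1)" using assms by (cases k) auto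
    ultimately show ?thesis by simp
  qed
  have L: "?L \<ge> 100 * real k" using assms by simp
  have "real (k + 1) * (\<Sum>m\<in>{1..n-1}. (2*real m+1) ^ (k - 1) / real m ^ k)
     \<le> real (k + 1) * (2 ^ k * (1 + ?L) + real k * 3 ^ (k - 1))"
    using S by (intro mult_left_mono) auto
  also have "\<dots> = (real (k + 1) * 2 ^ k) * (1 + ?L) + real k * (real (k + 1) * 3 ^ (k - 1))"
    by (simp add: algebra_simps)
  also have "\<dots> \<le> (4 ^ k / 2) * (1 + ?L) + real k * (2/3 * 4 ^ k)"
    using a b L assms by (intro add_mono mult_right_mono mult_left_mono) auto
  also have "\<dots> \<le> 4 ^ k * ?L"
  proof -
    have "real k \<ge> 3" using assms by simp
    hence "(1 + ?L) / 2 + real k * (2/3) \<le> ?L" using L by (simp add: field_simps)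
    hence "4 ^ k * ((1 + ?L) / 2 + real k * (2/3)) \<le> 4 ^ k * ?L" by (intro mult_left_mono) auto
    thus ?thesis by (simp add: algebra_simps)
  qed
  finally show ?thesis .
qed

lemma alg2: "f > 0 \<Longrightarrow> c > 0 \<Longrightarrow> 2 * (k::real) * N / f * (q * L / c) = k * (2 * q) / (c * f) * N * L"
  by (simp add: field_simps)

lemma case2:
  fixes n :: nat
  assumes "n \<ge> 3" "CARD('k::finite) \<ge> 3" "100 * real CARD('k) \<le> log 2 (real n)"
  shows "real (card (hedges n (CARD('k) + 1) :: (real^'k) set set)) \<le>
     real CARD('k) * 2 ^ (CARD('k) + 1 + CARD('k)) / fact (CARD('k) + 1) * real n ^ (2 * CARD('k)) * log 2 (real n)"
proof -
  let ?k = "CARD('k)"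
  let ?L = "log 2 (real n)"
  let ?S = "\<Sum>m\<in>{1..n-1}. (2*real m+1) ^ (?k - 1) / real m ^ ?k"
  have e1: "?k + (?k + 1) - 1 = 2 * ?k" by simp
  have e2: "?k + 1 - 1 = ?k" by simp
  have "real (card (hedges n (?k + 1) :: (real^'k) set set)) \<le> 2 * real ?k * real n ^ (?k + (?k + 1) - 1) / fact (?k + 1 - 1) *
      (\<Sum>m\<in>{1..n-1}. (2*real m+1) ^ (?k - 1) / real m ^ (?k + 1 - 1))"
    by (rule UB1) simp
  also have "\<dots> = 2 * real ?k * real n ^ (2 * ?k) / fact ?k * ?S" by (simp only: e1 e2)
  also have "?S \<le> 4 ^ ?k * ?L / real (?k + 1)"
  proof -
    have "real (?k + 1) * ?S \<le> 4 ^ ?k * ?L" using case2_sum[of n ?k] assms by simp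
    thus ?thesis by (subst pos_le_divide_eq) (auto simp: mult.commute)
  qed
  hence "2 * real ?k * real n ^ (2 * ?k) / fact ?k * ?S \<le> 2 * real ?k * real n ^ (2 * ?k) / fact ?k * (4 ^ ?k * ?L / real (?k + 1))"
    by (intro mult_left_mono) auto
  also have "\<dots> = real ?k * (2 * 4 ^ ?k) / (real (?k + 1) * fact ?k) * real n ^ (2 * ?k) * ?L"
    by (rule alg2) auto
  also have "real (?k + 1) * fact ?k = (fact (?k + 1) :: real)" by simp
  also have "(2::real) * 4 ^ ?k = 2 ^ (?k + 1 + ?k)"
    by (simp add: power_add power_mult_distrib[symmetric] mult_ac)
  finally show ?thesis .
qed

lemma case3:
  fixes n r :: nat
  assumes "n \<ge> 3" "CARD('k::finite) \<ge> 3" "CARD('k) + 1 < r"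
  shows "real (card (hedges n r :: (real^'k) set set)) \<le>
     real CARD('k) * 2 ^ (r + CARD('k) + 1) / fact r * real n ^ (r + CARD('k) - 1)"
proof -
  let ?k = "CARD('k)"
  let ?S = "\<Sum>m\<in>{1..n-1}. (2*real m+1) ^ (?k - 1) / real m ^ (r - 1)"
  have ht: "(2*real m+1) ^ (?k - 1) / real m ^ (r - 1) \<le> 3 ^ (?k - 1) * (1 / real m ^ 2)"
    if m: "m \<in> {1..n-1}" for m
  proof -
    have m1: "real m \<ge> 1" using m by auto
    have "(2*real m+1) ^ (?k - 1) \<le> (3 * real m) ^ (?k - 1)" using m1 by (intro power_mono) auto
    hence a: "(2*real m+1) ^ (?k - 1) \<le> 3 ^ (?k - 1) * real m ^ (?k - 1)" by (simp add: power_mult_distrib)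
    have "real m ^ (r - 1) = real m ^ (?k - 1) * real m ^ (r - ?k)"
      using assms by (simp add: power_add[symmetric])
    moreover have "real m ^ 2 \<le> real m ^ (r - ?k)" using m1 assms by (intro power_increasing) auto
    ultimately have b: "real m ^ (?k - 1) * real m ^ 2 \<le> real m ^ (r - 1)"
      using m1 by (simp add: mult_left_mono)
    have "(2*real m+1) ^ (?k - 1) / real m ^ (r - 1) \<le> 3 ^ (?k - 1) * real m ^ (?k - 1) / real m ^ (r - 1)"
      using a m1 by (intro divide_right_mono) auto
    also have "\<dots> \<le> 3 ^ (?k - 1) * real m ^ (?k - 1) / (real m ^ (?k - 1) * real m ^ 2)"
      using b m1 by (intro divide_left_mono mult_pos_pos) auto
    also have "\<dots> = 3 ^ (?k - 1) * (1 / real m ^ 2)" using m1 by simp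
    finally show ?thesis .
  qed
  have S: "?S \<le> 2 * 3 ^ (?k - 1)"
  proof -
    have "?S \<le> (\<Sum>m\<in>{1..n-1}. 3 ^ (?k - 1) * (1 / real m ^ 2))" by (rule sum_mono) (rule ht)
    also have "\<dots> = 3 ^ (?k - 1) * (\<Sum>m\<in>{1..n-1}. 1 / real m ^ 2)" by (simp add: sum_distrib_left)
    also have "(\<Sum>m\<in>{1..n-1}. 1 / real m ^ 2) \<le> 2 - 1 / real (n - 1)" using assms by (intro sq_sum_le) auto
    also have "\<dots> \<le> 2" by simp
    finally show ?thesis by simp
  qed
  have "real (card (hedges n r :: (real^'k) set set)) \<le> 2 * real ?k * real n ^ (?k + r - 1) / fact (r - 1) * ?S"
    by (rule UB1) (use assms in simp)
  also have "\<dots> \<le> 2 * real ?k * real n ^ (?k + r - 1) / fact (r - 1) * (2 * 3 ^ (?k - 1))"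
    using S by (intro mult_left_mono) auto
  also have "\<dots> \<le> real ?k * 2 ^ (r + ?k + 1) / fact r * real n ^ (r + ?k - 1)"
  proof -
    have "r * 3 ^ (?k - 1) \<le> 2 ^ (r + ?k - 1)" using r_three assms by simp
    hence "real (r * 3 ^ (?k - 1)) \<le> real (2 ^ (r + ?k - 1))" by (rule of_nat_mono)
    hence h: "real r * 3 ^ (?k - 1) \<le> 2 ^ (r + ?k - 1)" by simp
    have e: "(2::real) ^ (r + ?k + 1) = 4 * 2 ^ (r + ?k - 1)"
    proof -
      have ex: "r + ?k + 1 = (r + ?k - 1) + 2" using assms by simp
      have "(2::real) ^ (r + ?k + 1) = 2 ^ ((r + ?k - 1) + 2)" by (simp only: ex)
      also have "\<dots> = 2 ^ (r + ?k - 1) * 4" by (simp only: power_add) simp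
      finally show ?thesis by simp
    qed
    have fr: "(fact r :: real) = real r * fact (r - 1)" using assms by (simp add: fact_reduce)
    have h4: "4 * (real r * 3 ^ (?k - 1)) \<le> 2 ^ (r + ?k + 1)" using h unfolding e by simp
    have "real ?k * (4 * (real r * 3 ^ (?k - 1))) \<le> real ?k * 2 ^ (r + ?k + 1)"
      using h4 by (intro mult_left_mono) auto
    hence "4 * real ?k * 3 ^ (?k - 1) * real r \<le> real ?k * 2 ^ (r + ?k + 1)"
      by (simp add: mult_ac)
    hence "4 * real ?k * 3 ^ (?k - 1) * real r / fact r \<le> real ?k * 2 ^ (r + ?k + 1) / fact r"
      by (intro divide_right_mono) auto
    moreover have "4 * real ?k * 3 ^ (?k - 1) * real r / fact r = 4 * real ?k * 3 ^ (?k - 1) / fact (r - 1)"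
      using assms by (simp add: fr)
    ultimately have c: "4 * real ?k * 3 ^ (?k - 1) / fact (r - 1) \<le> real ?k * 2 ^ (r + ?k + 1) / fact r" by simp
    have "2 * real ?k * real n ^ (?k + r - 1) / fact (r - 1) * (2 * 3 ^ (?k - 1))
       = (4 * real ?k * 3 ^ (?k - 1) / fact (r - 1)) * real n ^ (r + ?k - 1)"
      by (simp add: add.commute mult_ac)
    also have "\<dots> \<le> (real ?k * 2 ^ (r + ?k + 1) / fact r) * real n ^ (r + ?k - 1)"
      using c by (intro mult_right_mono) auto
    finally show ?thesis .
  qed
  finally show ?thesis .
qed

definition APmap :: "nat \<Rightarrow> nat \<Rightarrow> ('k::finite \<Rightarrow> int) \<times> ('k \<Rightarrow> int) \<Rightarrow> (real^'k) set" where
  "APmap r M = (\<lambda>(w, x). (\<lambda>t::nat. iv (\<lambda>i. x i + int (r - 1) * max 0 (- w i)) + real t *\<^sub>R iv w) ` {0..<r})"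

definition Wset :: "nat \<Rightarrow> ('k::finite \<Rightarrow> int) set" where
  "Wset M = PiE UNIV (\<lambda>i. if i = undefined then {1..int M} else {- int M..int M})"

definition Xset :: "nat \<Rightarrow> nat \<Rightarrow> nat \<Rightarrow> ('k::finite \<Rightarrow> int) set" where
  "Xset n r M = PiE UNIV (\<lambda>_. {1..int n - int ((r - 1) * M)})"

lemma Wset_coord: "w \<in> Wset M \<Longrightarrow> (i = undefined \<longrightarrow> 1 \<le> w i \<and> w i \<le> int M) \<and> - int M \<le> w i \<and> w i \<le> int M"
  by (auto simp: Wset_def PiE_UNIV_domain Pi_iff split: if_splits dest!: spec[of _ i])

lemma Xset_coord: "x \<in> Xset n r M \<Longrightarrow> 1 \<le> x i \<and> x i \<le> int n - int ((r - 1) * M)"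
  by (auto simp: Xset_def PiE_UNIV_domain Pi_iff)

lemma AP_in_hedges:
  assumes "r \<ge> 2" "w \<in> Wset M" "x \<in> Xset n r M"
  shows "APmap r M (w, x) \<in> hedges n r"
proof -
  define s where "s = (\<lambda>i. x i + int (r - 1) * max 0 (- w i))"
  define g where "g = (\<lambda>t::nat. iv s + real t *\<^sub>R iv w)"
  have AP: "APmap r M (w, x) = g ` {0..<r}" by (simp add: APmap_def s_def g_def)
  have w1: "w undefined \<ge> 1" using Wset_coord[OF assms(2)] by simp
  hence ivw: "iv w \<noteq> 0" using iv_eq0[of w] by (auto simp: fun_eq_iff)
  have inj: "inj g" by (rule injI) (use ivw in \<open>auto simp: g_def\<close>)
  have sub: "g ` {0..<r} \<subseteq> grid n"
  proof
    fix p assume "p \<in> g ` {0..<r}"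
    then obtain t where t: "t < r" "p = g t" by auto
    define z where "z = (\<lambda>i. s i + int t * w i)"
    have "p = iv z" by (simp add: t g_def z_def vec_eq_iff)
    moreover have "z \<in> Gset n"
      unfolding Gset_def PiE_UNIV_domain
    proof (intro Pi_I)
      fix i
      have wc: "- int M \<le> w i \<and> w i \<le> int M" using Wset_coord[OF assms(2)] by blast
      have xc: "1 \<le> x i \<and> x i \<le> int n - int ((r - 1) * M)" using Xset_coord[OF assms(3)] by blast
      have tr: "int t \<le> int (r - 1)" using t by simp
      have rM: "int ((r - 1) * M) = int (r - 1) * int M" by simp
      show "z i \<in> {1..int n}"
      proof (cases "w i \<ge> 0")
        case True
        have "int t * w i \<le> int (r - 1) * int M" using tr wc True by (intro mult_mono) auto
        moreover have "0 \<le> int t * w i" using True by simp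
        moreover have "z i = x i + int t * w i" using True by (simp add: z_def s_def)
        ultimately have "1 \<le> z i \<and> z i \<le> int n" using xc rM by linarith
        thus ?thesis by simp
      next
        case False
        have "z i = x i + (int (r - 1) - int t) * (- w i)"
          using False by (simp add: z_def s_def algebra_simps)
        moreover have "(int (r - 1) - int t) * (- w i) \<le> int (r - 1) * int M"
          using tr wc False by (intro mult_mono) auto
        moreover have "0 \<le> (int (r - 1) - int t) * (- w i)" using tr False by (intro mult_nonneg_nonneg) auto
        ultimately have "1 \<le> z i \<and> z i \<le> int n" using xc rM by linarith
        thus ?thesis by simp
      qed
    qed
    ultimately show "p \<in> grid n" by (auto simp: grid_eq)
  qed
  have "card (g ` {0..<r}) = r" using card_image[OF inj_on_subset[OF inj]] by simp
  moreover have "collinear (g ` {0..<r})"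
    unfolding collinear_def
  proof (intro exI[of _ "iv w"] ballI)
    fix p q assume "p \<in> g ` {0..<r}" "q \<in> g ` {0..<r}"
    then obtain a b where "p = g a" "q = g b" by auto
    hence "p - q = (real a - real b) *\<^sub>R iv w" by (simp add: g_def algebra_simps)
    thus "\<exists>c. p - q = c *\<^sub>R iv w" by blast
  qed
  ultimately show ?thesis using sub AP by (simp add: hedges_def)
qed

lemma AP_inj:
  assumes "r \<ge> 2"
  shows "inj_on (APmap r M) (Wset M \<times> (Xset n r M :: ('k::finite \<Rightarrow> int) set))"
proof (rule inj_onI, clarify)
  fix w x w' x' :: "'k \<Rightarrow> int"
  assume W: "w \<in> Wset M" "x \<in> Xset n r M" "w' \<in> Wset M" "x' \<in> Xset n r M"
    and eq: "APmap r M (w, x) = APmap r M (w', x')"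
  define s where "s = (\<lambda>i. x i + int (r - 1) * max 0 (- w i))"
  define s' where "s' = (\<lambda>i. x' i + int (r - 1) * max 0 (- w' i))"
  define g where "g = (\<lambda>t::nat. iv s + real t *\<^sub>R iv w)"
  define g' where "g' = (\<lambda>t::nat. iv s' + real t *\<^sub>R iv w')"
  have S: "g ` {0..<r} = g' ` {0..<r}" using eq by (simp add: APmap_def s_def s'_def g_def g'_def)
  let ?j = "undefined :: 'k"
  have wj: "w ?j \<ge> 1" "w' ?j \<ge> 1" using Wset_coord[OF W(1)] Wset_coord[OF W(3)] by auto
  have "g 0 \<in> g' ` {0..<r}" using S assms by (metis atLeastLessThan_iff image_eqI le0 order_less_le_trans pos2)
  then obtain t' where t': "iv s = iv s' + real t' *\<^sub>R iv w'" by (auto simp: g_def g'_def)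
  have "g' 0 \<in> g ` {0..<r}" using S assms by (metis atLeastLessThan_iff image_eqI le0 order_less_le_trans pos2)
  then obtain t where t: "iv s' = iv s + real t *\<^sub>R iv w" by (auto simp: g_def g'_def)
  have c1: "real_of_int (s ?j) = s' ?j + real t' * w' ?j" using arg_cong[OF t', of "\<lambda>v. v $ ?j"] by simp
  have c2: "real_of_int (s' ?j) = s ?j + real t * w ?j" using arg_cong[OF t, of "\<lambda>v. v $ ?j"] by simp
  have "real t * w ?j + real t' * w' ?j = 0" using c1 c2 by linarith
  moreover have "real t' * w' ?j \<ge> 0" using wj by simp
  moreover have "real t * w ?j \<ge> 0" using wj by simp
  ultimately have "real t * w ?j = 0" by linarith
  hence "t = 0" using wj by simp
  hence ss: "iv s' = iv s" using t by simp
  have "g 1 \<in> g' ` {0..<r}" using S assms by (metis atLeastLessThan_iff image_eqI le0 Suc_1 Suc_le_lessD)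
  then obtain a where a: "iv s + iv w = iv s' + real a *\<^sub>R iv w'" by (auto simp: g_def g'_def)
  have "g' 1 \<in> g ` {0..<r}" using S assms by (metis atLeastLessThan_iff image_eqI le0 Suc_1 Suc_le_lessD)
  then obtain b where b: "iv s' + iv w' = iv s + real b *\<^sub>R iv w" by (auto simp: g_def g'_def)
  have a': "iv w = real a *\<^sub>R iv w'" using a ss by simp
  have b': "iv w' = real b *\<^sub>R iv w" using b ss by simp
  have "real_of_int (w ?j) = real a * w' ?j" using arg_cong[OF a', of "\<lambda>v. v $ ?j"] by simp
  also have "real_of_int (w' ?j) = real b * w ?j" using arg_cong[OF b', of "\<lambda>v. v $ ?j"] by simp
  finally have "real_of_int (w ?j) * 1 = real_of_int (w ?j) * (real a * real b)" by (simp add: mult_ac)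
  hence "real a * real b = 1" using wj by (subst (asm) mult_left_cancel) auto
  hence "a * b = 1" by (metis of_nat_1 of_nat_eq_iff of_nat_mult)
  hence "a = 1" by simp
  hence "iv w = iv w'" using a' by simp
  hence ww: "w = w'" using iv_inj by (auto dest: injD)
  have "s = s'" using ss iv_inj by (auto dest: injD)
  hence "x = x'" using ww by (auto simp: s_def s'_def fun_eq_iff dest: fun_cong)
  thus "w = w' \<and> x = x'" using ww by simp
qed

lemma card_Wset: "M \<ge> 0 \<Longrightarrow> card (Wset M :: ('k::finite \<Rightarrow> int) set) = M * (2 * M + 1) ^ (CARD('k) - 1)"
proof -
  let ?B = "\<lambda>i::'k. if i = undefined then {1..int M} else {- int M..int M}"
  have "card (Wset M :: ('k \<Rightarrow> int) set) = (\<Prod>i\<in>UNIV. card (?B i))" by (simp add: Wset_def card_PiE)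
  also have "\<dots> = card (?B undefined) * (\<Prod>i\<in>UNIV - {undefined}. card (?B i))"
    by (rule prod.remove) auto
  also have "(\<Prod>i\<in>UNIV - {undefined}. card (?B i)) = (\<Prod>i\<in>UNIV - {undefined::'k}. 2 * M + 1)"
  proof (rule prod.cong)
    fix i assume "i \<in> UNIV - {undefined::'k}"
    moreover have "nat (2 * int M + 1) = 2 * M + 1" by linarith
    ultimately show "card (?B i) = 2 * M + 1" by simp
  qed simp
  also have "\<dots> = (2 * M + 1) ^ (CARD('k) - 1)" by (simp add: card_Diff_singleton)
  finally show ?thesis by simp
qed

lemma card_Xset: "card (Xset n r M :: ('k::finite \<Rightarrow> int) set) = (n - (r - 1) * M) ^ CARD('k)"
proof -
  have h: "int (r - 1) * int M = int ((r - 1) * M)" by simp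
  have "nat (int n - int ((r - 1) * M)) = n - (r - 1) * M" by (simp add: nat_minus_as_int)
  thus ?thesis by (simp add: Xset_def card_PiE h)
qed

lemma finite_WX: "finite (Wset M \<times> (Xset n r M :: ('k::finite \<Rightarrow> int) set))"
  by (simp add: Wset_def Xset_def finite_PiE)

lemma LB_AP:
  assumes "r \<ge> 2"
  shows "M * (2 * M + 1) ^ (CARD('k) - 1) * (n - (r - 1) * M) ^ CARD('k) \<le> card (hedges n r :: (real^'k::finite) set set)"
proof -
  have "card ((Wset M :: ('k \<Rightarrow> int) set) \<times> (Xset n r M :: ('k \<Rightarrow> int) set)) = card (APmap r M ` ((Wset M :: ('k \<Rightarrow> int) set) \<times> (Xset n r M :: ('k \<Rightarrow> int) set)))"
    by (intro card_image[symmetric] AP_inj assms)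
  also have "\<dots> \<le> card (hedges n r :: (real^'k) set set)"
  proof (rule card_mono)
    show "finite (hedges n r :: (real^'k) set set)"
      by (rule finite_subset[of _ "Pow (grid n)"]) (auto simp: hedges_def finite_grid)
    show "APmap r M ` ((Wset M :: ('k \<Rightarrow> int) set) \<times> Xset n r M) \<subseteq> hedges n r"
      using AP_in_hedges[OF assms] by auto
  qed
  finally show ?thesis by (simp add: card_cartesian_product card_Wset card_Xset)
qed

lemma nine_three: "k \<ge> 2 \<Longrightarrow> 20 * 2 ^ k \<le> 9 * (3::nat) ^ k"
proof (induction k rule: nat_induct_at_least)
  case base thus ?case by simp
next
  case (Suc k) thus ?case by simp
qed

lemma pow2x: "k \<ge> 1 \<Longrightarrow> (X::real) * (2 * X) ^ (k - 1) = 2 ^ (k - 1) * X ^ k"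
  by (cases k) (simp_all add: power_mult_distrib mult_ac)

lemma ap_arith:
  fixes a c B :: real and k r :: nat
  assumes c1: "c \<ge> 1" and ac: "a \<ge> c - 1" and B: "B \<ge> real r * c" and r3: "r \<ge> 3" and k2: "k \<ge> 2"
    and kc: "10 * real k \<le> c"
  shows "(2 * real r * c) ^ (2 * k) / real r ^ (2 * k) \<le> a * (2 * a + 1) ^ (k - 1) * B ^ k"
proof -
  define d where "d = 1 / c"
  have d0: "0 < d" "d \<le> 1" using c1 by (auto simp: d_def)
  have cd: "c * (1 - d) = c - 1" using c1 by (simp add: d_def field_simps)
  have x1: "c * (1 - d) \<le> a" using ac cd by simp
  have x2: "2 * c * (1 - d) \<le> 2 * a + 1" using ac cd by simp
  have nn: "0 \<le> c * (1 - d)" using d0 c1 by simp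
  have rpos: "real r > 0" using r3 by simp
  have "(c * (1 - d)) * (2 * c * (1 - d)) ^ (k - 1) * (real r * c) ^ k \<le> a * (2 * a + 1) ^ (k - 1) * B ^ k"
    using x1 x2 B nn rpos c1 by (intro mult_mono power_mono) auto
  moreover have "(c * (1 - d)) * (2 * c * (1 - d)) ^ (k - 1) * (real r * c) ^ k
      = (1 - d) ^ k * 2 ^ (k - 1) * real r ^ k * c ^ (2 * k)"
  proof -
    have e: "2 * c * (1 - d) = 2 * (c * (1 - d))" by simp
    have "(c * (1 - d)) * (2 * (c * (1 - d))) ^ (k - 1) = 2 ^ (k - 1) * (c * (1 - d)) ^ k"
      by (rule pow2x) (use k2 in simp)
    hence "(c * (1 - d)) * (2 * c * (1 - d)) ^ (k - 1) = 2 ^ (k - 1) * (c * (1 - d)) ^ k"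
      unfolding e .
    moreover have c2: "c ^ (2 * k) = c ^ k * c ^ k" by (simp add: mult_2 power_add)
    ultimately show ?thesis by (simp add: power_mult_distrib mult_ac)
  qed
  moreover have "(2 * real r * c) ^ (2 * k) / real r ^ (2 * k) \<le> (1 - d) ^ k * 2 ^ (k - 1) * real r ^ k * c ^ (2 * k)"
  proof -
    have "1 + real k * (- d) \<le> (1 + (- d)) ^ k" by (rule Bernoulli_inequality) (use d0 in simp)
    moreover have "real k * d \<le> 1/10" using kc c1 by (simp add: d_def field_simps)
    ultimately have b: "9/10 \<le> (1 - d) ^ k" by simp
    have "20 * 2 ^ k \<le> 9 * (3::nat) ^ k" by (rule nine_three) (fact k2)
    hence "real (20 * 2 ^ k) \<le> real (9 * 3 ^ k)" by (rule of_nat_mono)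
    hence "20 * 2 ^ k \<le> 9 * (3::real) ^ k" by simp
    moreover have "(3::real) ^ k \<le> real r ^ k" using r3 by (intro power_mono) auto
    ultimately have "2 * 2 ^ k \<le> 9/10 * real r ^ k" by simp
    also have "\<dots> \<le> (1 - d) ^ k * real r ^ k" using b by (intro mult_right_mono) auto
    finally have h: "2 * 2 ^ k \<le> (1 - d) ^ k * real r ^ k" .
    have e: "(2 * real r * c) ^ (2 * k) / real r ^ (2 * k) = 4 ^ k * c ^ (2 * k)"
      using rpos by (simp add: power_mult_distrib power_mult)
    have "(4::real) ^ k = 2 ^ (k - 1) * (2 * 2 ^ k)"
      using k2 by (cases k) (auto simp: power_mult_distrib[symmetric] mult_ac)
    hence "(4::real) ^ k * c ^ (2 * k) \<le> 2 ^ (k - 1) * ((1 - d) ^ k * real r ^ k) * c ^ (2 * k)"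
      using h by (simp add: mult_left_mono mult_right_mono)
    thus ?thesis using e by (simp add: mult_ac)
  qed
  ultimately show ?thesis by linarith
qed

lemma LB12:
  fixes n r :: nat
  assumes "n \<ge> 3" "CARD('k::finite) \<ge> 3" "r \<ge> 3" "20 * r * CARD('k) \<le> n"
  shows "real n ^ (2 * CARD('k)) / real r ^ (2 * CARD('k)) \<le> real (card (hedges n r :: (real^'k) set set))"
proof -
  let ?k = "CARD('k)"
  define M where "M = n div (2 * r)"
  define c where "c = real n / (2 * real r)"
  have rpos: "real r > 0" using assms by simp
  have M1: "M * (2 * r) \<le> n" unfolding M_def by (rule div_times_less_eq_dividend)
  have M2: "n < M * (2 * r) + 2 * r"
  proof -
    have "n = M * (2 * r) + n mod (2 * r)" unfolding M_def by (rule div_mult_mod_eq[symmetric])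
    moreover have "n mod (2 * r) < 2 * r" using assms by simp
    ultimately show ?thesis by linarith
  qed
  have "(r - 1) * M \<le> (2 * r) * M" by (rule mult_le_mono1) simp
  moreover have "(2 * r) * M = M * (2 * r)" by (rule mult.commute)
  ultimately have rM: "(r - 1) * M \<le> n" using M1 by linarith
  have aM1: "real M * (2 * real r) \<le> real n" using of_nat_mono[OF M1] by simp
  have "real n < real (M * (2 * r) + 2 * r)" using M2 by (simp only: of_nat_less_iff)
  hence aM2: "real n < real M * (2 * real r) + 2 * real r" by simp
  have c1: "c \<ge> 1"
  proof -
    have "20 * r * ?k \<ge> 2 * r" using assms by simp
    hence "2 * r \<le> n" using assms(4) by linarith
    hence "real n \<ge> 2 * real r" using of_nat_mono[of "2 * r" n] by simp
    thus ?thesis using rpos by (simp add: c_def field_simps)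
  qed
  have ac: "real M \<ge> c - 1" using aM2 rpos by (simp add: c_def field_simps)
  have aleq: "real M \<le> c" using aM1 rpos by (simp add: c_def field_simps)
  have B: "real (n - (r - 1) * M) \<ge> real r * c"
  proof -
    have "real (n - (r - 1) * M) = real n - real (r - 1) * real M" using rM by (simp add: of_nat_diff)
    moreover have "real (r - 1) * real M \<le> real r * c"
      using aleq rpos assms by (intro mult_mono) auto
    moreover have "real r * c = real n / 2" using rpos by (simp add: c_def)
    ultimately show ?thesis by linarith
  qed
  have kc: "10 * real ?k \<le> c"
  proof -
    have "real (20 * r * ?k) \<le> real n" using assms(4) by (rule of_nat_mono)
    thus ?thesis using rpos by (simp add: c_def field_simps)
  qed
  have "(2 * real r * c) ^ (2 * ?k) / real r ^ (2 * ?k) \<le> real M * (2 * real M + 1) ^ (?k - 1) * real (n - (r - 1) * M) ^ ?k"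
    by (rule ap_arith[OF c1 ac B _ _ kc]) (use assms in auto)
  moreover have "2 * real r * c = real n" using rpos by (simp add: c_def)
  moreover have "real M * (2 * real M + 1) ^ (?k - 1) * real (n - (r - 1) * M) ^ ?k
      = real (M * (2 * M + 1) ^ (?k - 1) * (n - (r - 1) * M) ^ ?k)" by (simp add: add.commute)
  moreover have "M * (2 * M + 1) ^ (?k - 1) * (n - (r - 1) * M) ^ ?k \<le> card (hedges n r :: (real^'k) set set)"
    by (rule LB_AP) (use assms in simp)
  ultimately show ?thesis using of_nat_mono by (metis (no_types, lifting) order_trans)
qed

definition Yset :: "nat \<Rightarrow> 'k::finite \<Rightarrow> ('k \<Rightarrow> int) set" where
  "Yset n i = PiE UNIV (\<lambda>j. if j = i then {1} else {1..int n})"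

definition Axset :: "nat \<Rightarrow> nat \<Rightarrow> ('k::finite \<times> ('k \<Rightarrow> int) \<times> int set) set" where
  "Axset n r = (SIGMA i:UNIV. Yset n i \<times> {A. A \<subseteq> {1..int n} \<and> card A = r})"

definition psi :: "'k::finite \<times> ('k \<Rightarrow> int) \<times> int set \<Rightarrow> (real^'k) set" where
  "psi = (\<lambda>(i, y, A). (\<lambda>a. iv (y(i := a))) ` A)"

lemma Yset_coord:
  assumes "y \<in> Yset n i" "n \<ge> 1"
  shows "y i = 1 \<and> (\<forall>j. 1 \<le> y j \<and> y j \<le> int n)"
proof -
  have h: "y j \<in> (if j = i then {1} else {1..int n})" for j
    using assms(1) by (simp add: Yset_def PiE_UNIV_domain Pi_iff)
  have "y i = 1" using h[of i] by simp
  moreover have "1 \<le> y j \<and> y j \<le> int n" for j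
    using h[of j] assms(2) by (cases "j = i") auto
  ultimately show ?thesis by blast
qed

lemma psi_in:
  assumes "(i, y, A) \<in> Axset n r" "r \<ge> 1"
  shows "psi (i, y, A) \<in> hedges n r"
proof -
  have y: "y \<in> Yset n i" and A: "A \<subseteq> {1..int n}" "card A = r" using assms by (auto simp: Axset_def)
  have "A \<noteq> {}" using A assms by auto
  then obtain a0 where "a0 \<in> A" by blast
  hence n1: "n \<ge> 1" using A by auto
  have yc: "1 \<le> y j \<and> y j \<le> int n" for j
    using Yset_coord[OF y n1] by blast
  have inj: "inj_on (\<lambda>a. iv (y(i := a))) A"
  proof (rule inj_onI)
    fix a b assume "iv (y(i := a)) = iv (y(i := b))"
    hence "iv (y(i := a)) $ i = iv (y(i := b)) $ i" by simp
    thus "a = b" by simp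
  qed
  have sub: "psi (i, y, A) \<subseteq> grid n"
  proof
    fix p assume "p \<in> psi (i, y, A)"
    then obtain a where a: "a \<in> A" "p = iv (y(i := a))" by (auto simp: psi_def)
    have "y(i := a) \<in> Gset n"
      unfolding Gset_def PiE_UNIV_domain
    proof (intro Pi_I)
      fix j show "(y(i := a)) j \<in> {1..int n}" using yc[of j] a A by auto
    qed
    thus "p \<in> grid n" using a by (auto simp: grid_eq)
  qed
  have "card (psi (i, y, A)) = r" using card_image[OF inj] A by (simp add: psi_def)
  moreover have "collinear (psi (i, y, A))"
    unfolding collinear_def
  proof (intro exI[of _ "iv (\<lambda>j. if j = i then 1 else 0)"] ballI)
    fix p q assume "p \<in> psi (i, y, A)" "q \<in> psi (i, y, A)"
    then obtain a b where "p = iv (y(i := a))" "q = iv (y(i := b))" by (auto simp: psi_def)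
    hence "p - q = of_int (a - b) *\<^sub>R iv (\<lambda>j. if j = i then 1 else 0)" by (simp add: vec_eq_iff)
    thus "\<exists>c. p - q = c *\<^sub>R iv (\<lambda>j. if j = i then 1 else 0)" by blast
  qed
  ultimately show ?thesis using sub by (simp add: hedges_def)
qed

lemma psi_inj:
  assumes "r \<ge> 2"
  shows "inj_on psi (Axset n r :: ('k::finite \<times> _) set)"
proof (rule inj_onI)
  fix u v assume U: "u \<in> Axset n r" "v \<in> (Axset n r :: ('k \<times> _) set)" and eq0: "psi u = psi v"
  obtain i y A where u: "u = (i, y, A)" by (cases u) auto
  obtain i' y' A' where v: "v = (i', y', A')" by (cases v) auto
  have I: "(i, y, A) \<in> Axset n r" "(i', y', A') \<in> Axset n r" using U u v by auto
  have eq: "psi (i, y, A) = psi (i', y', A')" using eq0 u v by simp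
  have y: "y \<in> Yset n i" "y' \<in> Yset n i'" and A: "A \<subseteq> {1..int n}" "card A = r" "A' \<subseteq> {1..int n}" "card A' = r"
    using I by (auto simp: Axset_def)
  obtain a b where ab: "a \<in> A" "b \<in> A" "a \<noteq> b"
  proof -
    have "Suc (Suc 0) \<le> card A" using A assms by simp
    then obtain a B where "A = insert a B" "a \<notin> B" "Suc 0 \<le> card B" "finite B"
      by (auto simp: card_le_Suc_iff)
    moreover then obtain b where "b \<in> B" by (metis card.empty ex_in_conv not_less_eq_eq le0)
    ultimately show ?thesis using that by blast
  qed
  have n1: "n \<ge> 1" using ab A by auto
  have mem: "\<exists>a'\<in>A'. iv (y(i := a)) = iv (y'(i' := a'))" if "a \<in> A" for a
  proof -
    have "iv (y(i := a)) \<in> psi (i', y', A')" using eq that by (auto simp: psi_def)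
    thus ?thesis by (auto simp: psi_def)
  qed
  have mem': "\<exists>a'\<in>A. iv (y'(i' := a)) = iv (y(i := a'))" if "a \<in> A'" for a
  proof -
    have "iv (y'(i' := a)) \<in> psi (i, y, A)" using eq that by (auto simp: psi_def)
    thus ?thesis by (auto simp: psi_def)
  qed
  have ii: "i = i'"
  proof (rule ccontr)
    assume ne: "i \<noteq> i'"
    obtain a' where "iv (y(i := a)) = iv (y'(i' := a'))" using mem ab by blast
    hence "iv (y(i := a)) $ i = iv (y'(i' := a')) $ i" by simp
    hence 1: "a = y' i" using ne by simp
    obtain b' where "iv (y(i := b)) = iv (y'(i' := b'))" using mem ab by blast
    hence "iv (y(i := b)) $ i = iv (y'(i' := b')) $ i" by simp
    hence "b = y' i" using ne by simp
    thus False using 1 ab by simp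
  qed
  have yy: "y = y'"
  proof
    fix j
    show "y j = y' j"
    proof (cases "j = i")
      case True thus ?thesis using Yset_coord[OF y(1) n1] Yset_coord[OF y(2) n1] ii by simp
    next
      case False
      obtain a' where "iv (y(i := a)) = iv (y'(i' := a'))" using mem ab by blast
      hence "iv (y(i := a)) $ j = iv (y'(i' := a')) $ j" by simp
      thus ?thesis using False ii by simp
    qed
  qed
  have "A \<subseteq> A'"
  proof
    fix c assume c: "c \<in> A"
    then obtain c' where c': "c' \<in> A'" "iv (y(i := c)) = iv (y'(i' := c'))" using mem by blast
    hence "iv (y(i := c)) $ i = iv (y'(i' := c')) $ i" by simp
    hence "c = c'" using ii by simp
    thus "c \<in> A'" using c' by simp
  qed
  moreover have "A' \<subseteq> A"
  proof
    fix c assume c: "c \<in> A'"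
    then obtain c' where c': "c' \<in> A" "iv (y'(i' := c)) = iv (y(i := c'))" using mem' by blast
    hence "iv (y'(i' := c)) $ i = iv (y(i := c')) $ i" by simp
    hence "c = c'" using ii by simp
    thus "c \<in> A" using c' by simp
  qed
  ultimately show "u = v" using ii yy u v by blast
qed

lemma card_Yset: "card (Yset n (i::'k::finite)) = n ^ (CARD('k) - 1)"
proof -
  let ?B = "\<lambda>j::'k. if j = i then {1::int} else {1..int n}"
  have "card (Yset n i) = (\<Prod>j\<in>UNIV. card (?B j))" by (simp add: Yset_def card_PiE)
  also have "\<dots> = card (?B i) * (\<Prod>j\<in>UNIV - {i}. card (?B j))" by (rule prod.remove) auto
  also have "(\<Prod>j\<in>UNIV - {i}. card (?B j)) = (\<Prod>j\<in>UNIV - {i}. n)" by (rule prod.cong) auto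
  also have "\<dots> = n ^ (CARD('k) - 1)" by (simp add: card_Diff_singleton)
  finally show ?thesis by simp
qed

lemma LB3:
  assumes "r \<ge> 2"
  shows "CARD('k) * (n choose r) * n ^ (CARD('k) - 1) \<le> card (hedges n r :: (real^'k::finite) set set)"
proof -
  have fY: "finite (Yset n i)" for i :: 'k by (simp add: Yset_def finite_PiE)
  have fS: "finite {A. A \<subseteq> {1..int n} \<and> card A = r}" by (rule finite_subset[of _ "Pow {1..int n}"]) auto
  have cS: "card {A. A \<subseteq> {1..int n} \<and> card A = r} = n choose r" by (simp add: n_subsets)
  have "card (Axset n r :: ('k \<times> _) set) = (\<Sum>i\<in>(UNIV::'k set). card (Yset n i) * (n choose r))"
    unfolding Axset_def using fY fS by (simp add: card_cartesian_product cS)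
  also have "\<dots> = CARD('k) * (n choose r) * n ^ (CARD('k) - 1)" by (simp add: card_Yset)
  finally have cA: "card (Axset n r :: ('k \<times> _) set) = CARD('k) * (n choose r) * n ^ (CARD('k) - 1)" .
  have "card (Axset n r :: ('k \<times> _) set) = card (psi ` (Axset n r :: ('k \<times> _) set))"
    by (intro card_image[symmetric] psi_inj assms)
  also have "\<dots> \<le> card (hedges n r :: (real^'k) set set)"
  proof (rule card_mono)
    show "finite (hedges n r :: (real^'k) set set)"
      by (rule finite_subset[of _ "Pow (grid n)"]) (auto simp: hedges_def finite_grid)
    show "psi ` (Axset n r :: ('k \<times> _) set) \<subseteq> hedges n r"
      using psi_in assms by fastforce
  qed
  finally show ?thesis using cA by simp
qed

lemma log_facts:
  fixes n x :: nat
  assumes "n \<ge> 3" "real x \<le> 0.01 * log 2 (real n)"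
  shows "100 * real x \<le> log 2 (real n)" "2 ^ (100 * x) \<le> real n"
proof -
  show h: "100 * real x \<le> log 2 (real n)" using assms by simp
  have "(2::real) ^ (100 * x) = 2 powr (real (100 * x))" using powr_realpow[of 2 "100 * x"] by simp
  also have "\<dots> \<le> 2 powr (log 2 (real n))" using h by (intro powr_mono) auto
  also have "\<dots> = real n" using assms by simp
  finally show "2 ^ (100 * x) \<le> real n" .
qed

lemma small_k:
  fixes k :: nat assumes "k \<ge> 1"
  shows "40 * k * k \<le> (2::nat) ^ (100 * k)"
proof -
  have "k \<le> 2 ^ k" by (simp add: less_imp_le)
  hence "k * k \<le> 2 ^ k * 2 ^ k" by (intro mult_mono) auto
  also have "\<dots> = 2 ^ (2 * k)" by (simp add: mult_2 power_add)
  finally have "40 * k * k \<le> 64 * 2 ^ (2 * k)" by simp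
  also have "\<dots> = 2 ^ (2 * k + 6)" by (simp add: power_add)
  also have "\<dots> \<le> 2 ^ (100 * k)" using assms by (intro power_increasing) auto
  finally show ?thesis .
qed

theorem claim4p1:
  fixes n r :: nat
  defines "k \<equiv> CARD('k::finite)"
  defines "e \<equiv> real (card (hedges n r :: (real^'k) set set))"
  assumes "n \<ge> 3" "k \<ge> 3" "r \<ge> 3"
    and "real r \<le> 0.01 * log 2 (real n)" "real k \<le> 0.01 * log 2 (real n)"
  shows "(r \<le> k \<longrightarrow>
           real n ^ (2*k) / real r ^ (2*k) \<le> e \<and>
           e \<le> real k * 2 ^ (r + k) / fact r * real n ^ (2*k))
       \<and> (r = k + 1 \<longrightarrow>
           real n ^ (2*k) / real r ^ (2*k) \<le> e \<and>
           e \<le> real k * 2 ^ (r + k) / fact r * real n ^ (2*k) * log 2 (real n))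
       \<and> (k + 1 < r \<and> r \<le> 2*k \<longrightarrow>
           real k * real (n choose r) * real n ^ (k - 1) \<le> e \<and>
           e \<le> real k * 2 ^ (r + k + 1) / fact r * real n ^ (r + k - 1))"
proof -
  have L: "100 * real k \<le> log 2 (real n)" and N: "2 ^ (100 * k) \<le> real n"
    using log_facts[OF assms(3,7)] by auto
  have N8: "8 ^ k \<le> real n"
  proof -
    have "(8::real) ^ k = 2 ^ (3 * k)" by (simp add: power_mult)
    also have "\<dots> \<le> 2 ^ (100 * k)" by (intro power_increasing) auto
    finally show ?thesis using N by linarith
  qed
  have LB: "real n ^ (2*k) / real r ^ (2*k) \<le> e" if rk: "r \<le> k + 1"
  proof -
    have "20 * r * k \<le> 40 * k * k" using rk assms by (simp add: mult_mono)
    also have "\<dots> \<le> 2 ^ (100 * k)" using small_k assms by simp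
    finally have "real (20 * r * k) \<le> real ((2::nat) ^ (100 * k))" by (rule of_nat_mono)
    moreover have "real ((2::nat) ^ (100 * k)) = (2::real) ^ (100 * k)" by simp
    ultimately have "real (20 * r * k) \<le> real n" using N by linarith
    hence "20 * r * k \<le> n" by (simp only: of_nat_le_iff)
    thus ?thesis unfolding e_def k_def by (intro LB12) (use assms in \<open>auto simp: k_def\<close>)
  qed
  have P1: "r \<le> k \<longrightarrow>
           real n ^ (2*k) / real r ^ (2*k) \<le> e \<and>
           e \<le> real k * 2 ^ (r + k) / fact r * real n ^ (2*k)"
  proof
    assume rk: "r \<le> k"
    have "e \<le> real k * 2 ^ (r + k) / fact r * real n ^ (2*k)"
      unfolding e_def k_def by (rule case1) (use assms N8 rk in \<open>auto simp: k_def\<close>)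
    thus "real n ^ (2*k) / real r ^ (2*k) \<le> e \<and> e \<le> real k * 2 ^ (r + k) / fact r * real n ^ (2*k)"
      using LB rk by simp
  qed
  have P2: "r = k + 1 \<longrightarrow>
           real n ^ (2*k) / real r ^ (2*k) \<le> e \<and>
           e \<le> real k * 2 ^ (r + k) / fact r * real n ^ (2*k) * log 2 (real n)"
  proof
    assume rk: "r = k + 1"
    have "e \<le> real k * 2 ^ (k + 1 + k) / fact (k + 1) * real n ^ (2*k) * log 2 (real n)"
      unfolding e_def k_def rk by (rule case2) (use assms L in \<open>auto simp: k_def\<close>)
    hence "e \<le> real k * 2 ^ (r + k) / fact r * real n ^ (2*k) * log 2 (real n)" using rk by simp
    thus "real n ^ (2*k) / real r ^ (2*k) \<le> e \<and> e \<le> real k * 2 ^ (r + k) / fact r * real n ^ (2*k) * log 2 (real n)"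
      using LB rk by simp
  qed
  have P3: "k + 1 < r \<and> r \<le> 2*k \<longrightarrow>
           real k * real (n choose r) * real n ^ (k - 1) \<le> e \<and>
           e \<le> real k * 2 ^ (r + k + 1) / fact r * real n ^ (r + k - 1)"
  proof
    assume rk: "k + 1 < r \<and> r \<le> 2*k"
    have "k * (n choose r) * n ^ (k - 1) \<le> card (hedges n r :: (real^'k) set set)"
      unfolding k_def by (rule LB3) (use assms in simp)
    hence "real (k * (n choose r) * n ^ (k - 1)) \<le> e" unfolding e_def by (rule of_nat_mono)
    hence a: "real k * real (n choose r) * real n ^ (k - 1) \<le> e" by simp
    have "e \<le> real k * 2 ^ (r + k + 1) / fact r * real n ^ (r + k - 1)"
      unfolding e_def k_def by (rule case3) (use assms rk in \<open>auto simp: k_def\<close>)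
    thus "real k * real (n choose r) * real n ^ (k - 1) \<le> e \<and>
           e \<le> real k * 2 ^ (r + k + 1) / fact r * real n ^ (r + k - 1)" using a by simp
  qed
  show ?thesis using P1 P2 P3 by blast
qed

end
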